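(* Let $k\ge s\ge1$, let $\tau_1,\dots,\tau_k\in[0,1]$ be distinct, let $\ell_j$ be the Lagrange polynomials of degree $k-1$ on these nodes, and consider the $k$-stage collocation Runge--Kutta method with Butcher matrix $\mathcal A=(\alpha_{ij})$, $\alpha_{ij}=\int_0^{\tau_i}\ell_j(\tau)\,\mathrm{d}\tau$, and weights $\omega_j=\int_0^1\ell_j(\tau)\,\mathrm{d}\tau$. Let $\Omega=\mathrm{diag}(\omega_1,\dots,\omega_k)$ and $\mathcal P_s\in\mathbb R^{k\times s}$ with $(\mathcal P_s)_{ij}=P_j(\tau_i)$. Provided that the quadrature formula $(\omega_i,\tau_i)_{i=1}^k$ is exact for polynomials of degree at least $2s-1$, the Runge--Kutta method with abscissae $\tau_1,\dots,\tau_k$, weights $\omega_1,\dots,\omega_k$ and Butcher matrix $A=\mathcal A\mathcal P_s\mathcal P_s^T\Omega$ is the method HBVM$(k,s)$ based at the abscissae $\{\tau_i\}$, i.e. $\mathcal A\mathcal P_s\mathcal P_s^T\Omega=\mathcal I_s\mathcal P_s^T\Omega$.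
   Context: $P_j(t)=\sqrt{2j-1}\,\hat P_{j-1}(t)$, with $\hat P_{j-1}$ the shifted Legendre polynomial of degree $j-1$ on $[0,1]$, so that $\{P_j\}$ is orthonormal on $[0,1]$. HBVM$(k,s)$ based at the abscissae $\{\tau_i\}$ is the Runge--Kutta method with abscissae $\tau_i$, weights $\omega_i$ and Butcher matrix $\mathcal I_s\mathcal P_s^T\Omega$, where $\mathcal I_s\in\mathbb R^{k\times s}$ has entries $(\mathcal I_s)_{ij}=\int_0^{\tau_i}P_j(x)\,\mathrm{d}x$. *)

theory Defs
  imports "HOL-Analysis.Analysis" "HOL-Computational_Algebra.Polynomial"
begin

text \<open>Shifted Legendre polynomial of degree n on [0,1] (normalised by value 1 at t = 1):
  hatP n t = sum_{i=0}^n (-1)^(n+i) (n choose i) ((n+i) choose i) t^i.\<close>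
definition shifted_legendre :: "nat \<Rightarrow> real \<Rightarrow> real" where
  "shifted_legendre n t =
     (\<Sum>i\<le>n. (-1) ^ (n + i) * real (n choose i) * real ((n + i) choose i) * t ^ i)"

text \<open>Orthonormal Legendre basis on [0,1]: P_j = sqrt(2j-1) hatP_{j-1}, j \<ge> 1.\<close>
definition legP :: "nat \<Rightarrow> real \<Rightarrow> real" where
  "legP j t = sqrt (2 * real j - 1) * shifted_legendre (j - 1) t"

definition lagrange :: "nat \<Rightarrow> (nat \<Rightarrow> real) \<Rightarrow> nat \<Rightarrow> real \<Rightarrow> real" where
  "lagrange k \<tau> j t = (\<Prod>m\<in>{1..k} - {j}. (t - \<tau> m) / (\<tau> j - \<tau> m))"

definition coll_A :: "nat \<Rightarrow> (nat \<Rightarrow> real) \<Rightarrow> nat \<Rightarrow> nat \<Rightarrow> real" where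
  "coll_A k \<tau> i j = integral {0..\<tau> i} (lagrange k \<tau> j)"

definition coll_w :: "nat \<Rightarrow> (nat \<Rightarrow> real) \<Rightarrow> nat \<Rightarrow> real" where
  "coll_w k \<tau> j = integral {0..1} (lagrange k \<tau> j)"

text \<open>Matrices are functions nat => nat => real, indices starting at 1.\<close>
definition Pmat :: "(nat \<Rightarrow> real) \<Rightarrow> nat \<Rightarrow> nat \<Rightarrow> real" where
  "Pmat \<tau> i j = legP j (\<tau> i)"

definition Imat :: "(nat \<Rightarrow> real) \<Rightarrow> nat \<Rightarrow> nat \<Rightarrow> real" where
  "Imat \<tau> i j = integral {0..\<tau> i} (legP j)"

definition Omega :: "nat \<Rightarrow> (nat \<Rightarrow> real) \<Rightarrow> nat \<Rightarrow> nat \<Rightarrow> real" where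
  "Omega k \<tau> i j = (if i = j then coll_w k \<tau> i else 0)"

definition mmul :: "nat \<Rightarrow> (nat \<Rightarrow> nat \<Rightarrow> real) \<Rightarrow> (nat \<Rightarrow> nat \<Rightarrow> real) \<Rightarrow> nat \<Rightarrow> nat \<Rightarrow> real" where
  "mmul n A B i j = (\<Sum>l=1..n. A i l * B l j)"

definition mtrans :: "(nat \<Rightarrow> nat \<Rightarrow> real) \<Rightarrow> nat \<Rightarrow> nat \<Rightarrow> real" where
  "mtrans A i j = A j i"

definition quad_exact :: "nat \<Rightarrow> (nat \<Rightarrow> real) \<Rightarrow> nat \<Rightarrow> bool" where
  "quad_exact k \<tau> d \<longleftrightarrow>
     (\<forall>p :: real poly. degree p \<le> d \<longrightarrow>
        (\<Sum>i=1..k. coll_w k \<tau> i * poly p (\<tau> i)) = integral {0..1} (poly p))"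

end

theory Submission
  imports Defs
begin

definition Lp :: "nat \<Rightarrow> (nat \<Rightarrow> real) \<Rightarrow> nat \<Rightarrow> real poly" where
  "Lp k \<tau> j = (\<Prod>m\<in>{1..k} - {j}. smult (1 / (\<tau> j - \<tau> m)) [:- \<tau> m, 1:])"

lemma poly_Lp: "poly (Lp k \<tau> j) t = lagrange k \<tau> j t"
  unfolding Lp_def lagrange_def by (simp add: poly_prod diff_divide_distrib mult.commute)

lemma degree_Lp: "j \<in> {1..k} \<Longrightarrow> degree (Lp k \<tau> j) \<le> k - 1"
proof -
  assume j: "j \<in> {1..k}"
  have "degree (Lp k \<tau> j) \<le> sum (degree \<circ> (\<lambda>m. smult (1 / (\<tau> j - \<tau> m)) [:- \<tau> m, 1:])) ({1..k} - {j})"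
    unfolding Lp_def by (rule degree_prod_sum_le) simp
  also have "\<dots> \<le> sum (\<lambda>m. 1) ({1..k} - {j})"
    by (rule sum_mono) simp
  also have "\<dots> = k - 1" using j by simp
  finally show ?thesis .
qed

lemma lagrange_node:
  assumes inj: "inj_on \<tau> {1..k}" and i: "i \<in> {1..k}" and l: "l \<in> {1..k}"
  shows "lagrange k \<tau> l (\<tau> i) = (if i = l then 1 else 0)"
proof (cases "i = l")
  case True
  have "\<And>m. m \<in> {1..k} - {l} \<Longrightarrow> (\<tau> l - \<tau> m) / (\<tau> l - \<tau> m) = 1"
  proof -
    fix m assume "m \<in> {1..k} - {l}"
    then have "\<tau> l \<noteq> \<tau> m" using inj l by (auto dest: inj_onD)
    then show "(\<tau> l - \<tau> m) / (\<tau> l - \<tau> m) = 1" by simp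
  qed
  then show ?thesis using True unfolding lagrange_def by simp
next
  case False
  then have "i \<in> {1..k} - {l}" using i by simp
  then have ex: "\<exists>m\<in>{1..k} - {l}. (\<tau> i - \<tau> m) / (\<tau> l - \<tau> m) = 0"
    by (intro bexI[of _ i]) simp_all
  have "lagrange k \<tau> l (\<tau> i) = 0"
    unfolding lagrange_def by (rule prod_zero[OF _ ex]) simp
  then show ?thesis using False by (simp only: if_False)
qed

lemma interp:
  fixes q :: "real poly"
  assumes inj: "inj_on \<tau> {1..k}" and deg: "degree q \<le> k - 1" and k: "1 \<le> k"
  shows "poly q t = (\<Sum>l=1..k. lagrange k \<tau> l t * poly q (\<tau> l))"
proof -
  define r where "r = (\<Sum>l=1..k. smult (poly q (\<tau> l)) (Lp k \<tau> l))"
  have pr: "poly r t = (\<Sum>l=1..k. lagrange k \<tau> l t * poly q (\<tau> l))" for t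
    unfolding r_def by (simp add: poly_sum poly_Lp mult.commute)
  have dr: "degree r \<le> k - 1"
    unfolding r_def
  proof (rule degree_sum_le)
    fix l assume "l \<in> {1..k}"
    then have "degree (Lp k \<tau> l) \<le> k - 1" by (rule degree_Lp)
    then show "degree (smult (poly q (\<tau> l)) (Lp k \<tau> l)) \<le> k - 1"
      using degree_smult_le order.trans by blast
  qed simp
  have qr: "q = r"
  proof (rule poly_eqI_degree[where A = "\<tau> ` {1..k}"])
    fix x assume "x \<in> \<tau> ` {1..k}"
    then obtain i where i: "i \<in> {1..k}" and x: "x = \<tau> i" by auto
    have "poly r x = (\<Sum>l=1..k. if l = i then poly q (\<tau> l) else 0)"
      unfolding pr x
    proof (rule sum.cong[OF refl])
      fix l assume l: "l \<in> {1..k}"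
      show "lagrange k \<tau> l (\<tau> i) * poly q (\<tau> l) = (if l = i then poly q (\<tau> l) else 0)"
        unfolding lagrange_node[OF inj i l] by auto
    qed
    also have "\<dots> = poly q x" using i x by (simp add: sum.delta')
    finally show "poly q x = poly r x" by simp
  next
    have c: "card (\<tau> ` {1..k}) = k" using inj by (simp add: card_image)
    have kk: "k - 1 < k" using k by simp
    show "degree q < card (\<tau> ` {1..k})" unfolding c using deg kk by (rule le_less_trans)
    show "degree r < card (\<tau> ` {1..k})" unfolding c using dr kk by (rule le_less_trans)
  qed
  have "poly q t = poly r t" by (simp only: qr)
  also have "\<dots> = (\<Sum>l=1..k. lagrange k \<tau> l t * poly q (\<tau> l))" by (rule pr)
  finally show ?thesis .
qed

definition LegPoly :: "nat \<Rightarrow> real poly" where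
  "LegPoly j = smult (sqrt (2 * real j - 1))
     (\<Sum>i\<le>j - 1. monom ((-1) ^ (j - 1 + i) * real (j - 1 choose i) * real ((j - 1 + i) choose i)) i)"

lemma poly_LegPoly: "poly (LegPoly j) t = legP j t"
  unfolding LegPoly_def legP_def shifted_legendre_def
  by (simp add: poly_sum poly_monom)

lemma degree_LegPoly: "degree (LegPoly j) \<le> j - 1"
  unfolding LegPoly_def
proof (rule order.trans[OF degree_smult_le], rule degree_sum_le)
  fix i assume "i \<in> {..j - 1}"
  then show "degree (monom ((-1) ^ (j - 1 + i) * real (j - 1 choose i) * real ((j - 1 + i) choose i)) i) \<le> j - 1"
  proof -
    have "degree (monom ((-1) ^ (j - 1 + i) * real (j - 1 choose i) * real ((j - 1 + i) choose i)) i) \<le> i"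
      by (rule degree_monom_le)
    moreover have "i \<le> j - 1" using \<open>i \<in> {..j - 1}\<close> by simp
    ultimately show ?thesis by (rule le_trans)
  qed
qed simp

lemma cont_lagrange: "continuous_on S (lagrange k \<tau> l)"
proof -
  have "continuous_on S (\<lambda>t. poly (Lp k \<tau> l) t)"
    by (rule continuous_on_poly) (rule continuous_on_id)
  then show ?thesis by (simp add: poly_Lp)
qed

lemma AP:
  assumes inj: "inj_on \<tau> {1..k}" and j: "j \<in> {1..s}" and sk: "s \<le> k"
  shows "mmul k (coll_A k \<tau>) (Pmat \<tau>) i j = Imat \<tau> i j"
proof -
  have k: "1 \<le> k" using j sk by auto
  have deg: "degree (LegPoly j) \<le> k - 1" using degree_LegPoly[of j] j sk by auto
  have "mmul k (coll_A k \<tau>) (Pmat \<tau>) i j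
      = (\<Sum>l=1..k. integral {0..\<tau> i} (\<lambda>t. lagrange k \<tau> l t * legP j (\<tau> l)))"
    unfolding mmul_def coll_A_def Pmat_def by (simp add: integral_mult_left)
  also have "\<dots> = integral {0..\<tau> i} (\<lambda>t. \<Sum>l=1..k. lagrange k \<tau> l t * legP j (\<tau> l))"
  proof (rule integral_sum[symmetric])
    show "finite {1..k}" by simp
    fix l
    have "continuous_on {0..\<tau> i} (\<lambda>t. lagrange k \<tau> l t * legP j (\<tau> l))"
      by (rule continuous_on_mult_right, rule cont_lagrange)
    then show "(\<lambda>t. lagrange k \<tau> l t * legP j (\<tau> l)) integrable_on {0..\<tau> i}"
      by (rule integrable_continuous_interval)
  qed
  also have "\<dots> = integral {0..\<tau> i} (legP j)"
  proof -
    have "(\<lambda>t. \<Sum>l=1..k. lagrange k \<tau> l t * legP j (\<tau> l)) = legP j"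
    proof
      fix t
      show "(\<Sum>l=1..k. lagrange k \<tau> l t * legP j (\<tau> l)) = legP j t"
        using interp[OF inj deg k, of t] unfolding poly_LegPoly by simp
    qed
    then show ?thesis by simp
  qed
  finally show ?thesis unfolding Imat_def .
qed

theorem theorem4p2:
  fixes k s :: nat and \<tau> :: "nat \<Rightarrow> real"
  assumes "1 \<le> s" and "s \<le> k"
    and "\<forall>i\<in>{1..k}. 0 \<le> \<tau> i \<and> \<tau> i \<le> 1"
    and "inj_on \<tau> {1..k}"
    and "quad_exact k \<tau> (2 * s - 1)"
  shows "\<forall>i\<in>{1..k}. \<forall>j\<in>{1..k}.
           mmul k (mmul s (mmul k (coll_A k \<tau>) (Pmat \<tau>)) (mtrans (Pmat \<tau>))) (Omega k \<tau>) i j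
         = mmul k (mmul s (Imat \<tau>) (mtrans (Pmat \<tau>))) (Omega k \<tau>) i j"
proof -
  have h: "mmul s (mmul k (coll_A k \<tau>) (Pmat \<tau>)) (mtrans (Pmat \<tau>))
      = mmul s (Imat \<tau>) (mtrans (Pmat \<tau>))"
  proof (intro ext)
    fix i l
    show "mmul s (mmul k (coll_A k \<tau>) (Pmat \<tau>)) (mtrans (Pmat \<tau>)) i l
      = mmul s (Imat \<tau>) (mtrans (Pmat \<tau>)) i l"
      unfolding mmul_def[of s]
    proof (rule sum.cong[OF refl])
      fix m assume m: "m \<in> {1..s}"
      show "mmul k (coll_A k \<tau>) (Pmat \<tau>) i m * mtrans (Pmat \<tau>) m l
          = Imat \<tau> i m * mtrans (Pmat \<tau>) m l"
        unfolding AP[OF assms(4) m assms(2)] ..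
    qed
  qed
  show ?thesis unfolding h by blast
qed

end
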